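(* Let $c\ge 1$ be an integer and consider the equivalence relation on $S_n$ generated by the replacement partition of $S_{c+1}$ whose only nontrivial part is $\{x\in S_{c+1}: x_1=1\}$. Let $f(n)$ denote the number of equivalence classes in $S_n$ (with $f(0)=1$), and for positive integers $k,n$ let $g(k,n)$ be the number of classes in $S_n$ containing at least one $k$-squished permutation. Then $$f(n)=\begin{cases} n!, & n<c+1,\\ \displaystyle\sum_{j=1}^{n} f(j-1)\, g(1,n-j+1)\binom{n-1}{j-1}, & n\ge c+1.\end{cases}$$
   Context: Permutations are written in one-line notation as words. The order permutation (standardization) of a word $u$ of distinct positive integers of length $\ell$ is the unique $\pi\in S_\ell$ with $\pi_i<\pi_j$ iff $u_i<u_j$. The equivalence is generated by declaring $\phi\equiv\psi$ whenever $\phi=aub$ and $\psi=avb$ for words $a,b,u,v$ with $u,v$ of length $c+1$ whose order permutations both begin with $1$ (i.e., the first letter of $u$ is the smallest letter of $u$, and likewise for $v$). A permutation of $S_n$ is $k$-squished if for each $j\le k$, the letter $j$ occurs among the first $c(j-1)+1$ positions. *)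

theory Defs
  imports Main
begin

definition perms :: "nat \<Rightarrow> nat list set" where
  "perms n = {xs. distinct xs \<and> set xs = {1..n}}"

text \<open>The order permutation of a word u of distinct letters begins with 1
  iff the first letter of u is the smallest letter of u.\<close>
definition std_starts_with_one :: "nat list \<Rightarrow> bool" where
  "std_starts_with_one u \<longleftrightarrow> u \<noteq> [] \<and> (\<forall>x\<in>set u. hd u \<le> x)"

definition repl_step :: "nat \<Rightarrow> nat \<Rightarrow> (nat list \<times> nat list) set" where
  "repl_step c n = {(\<phi>, \<psi>). \<phi> \<in> perms n \<and> \<psi> \<in> perms n \<and>
     (\<exists>a u v b. \<phi> = a @ u @ b \<and> \<psi> = a @ v @ b \<and>
        length u = c + 1 \<and> length v = c + 1 \<and>
        std_starts_with_one u \<and> std_starts_with_one v)}"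

definition repl_equiv :: "nat \<Rightarrow> nat \<Rightarrow> (nat list \<times> nat list) set" where
  "repl_equiv c n = Id_on (perms n) \<union> (repl_step c n \<union> (repl_step c n)\<inverse>)\<^sup>+"

definition classes :: "nat \<Rightarrow> nat \<Rightarrow> nat list set set" where
  "classes c n = perms n // repl_equiv c n"

definition num_classes :: "nat \<Rightarrow> nat \<Rightarrow> nat" where
  "num_classes c n = card (classes c n)"

definition squished :: "nat \<Rightarrow> nat \<Rightarrow> nat list \<Rightarrow> bool" where
  "squished c k \<sigma> \<longleftrightarrow> (\<forall>j\<in>{1..k}. j \<in> set (take (c * (j - 1) + 1) \<sigma>))"

definition num_squished_classes :: "nat \<Rightarrow> nat \<Rightarrow> nat \<Rightarrow> nat" where
  "num_squished_classes c k n = card {C \<in> classes c n. \<exists>\<sigma>\<in>C. squished c k \<sigma>}"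

end

theory Submission
  imports Defs "HOL-Combinatorics.Multiset_Permutations"
begin

definition W :: "nat set \<Rightarrow> nat list set" where
  "W A = {xs. distinct xs \<and> set xs = A}"

definition stepA :: "nat \<Rightarrow> nat set \<Rightarrow> (nat list \<times> nat list) set" where
  "stepA c A = {(\<phi>, \<psi>). \<phi> \<in> W A \<and> \<psi> \<in> W A \<and>
     (\<exists>a u v b. \<phi> = a @ u @ b \<and> \<psi> = a @ v @ b \<and>
        length u = c + 1 \<and> length v = c + 1 \<and>
        std_starts_with_one u \<and> std_starts_with_one v)}"

definition EA :: "nat \<Rightarrow> nat set \<Rightarrow> (nat list \<times> nat list) set" where
  "EA c A = Id_on (W A) \<union> (stepA c A \<union> (stepA c A)\<inverse>)\<^sup>+"

lemma W_perms: "W A = permutations_of_set A"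
  by (auto simp: W_def permutations_of_set_def)

lemma perms_W: "perms n = W {1..n}"
  by (auto simp: W_def perms_def)

lemma repl_equiv_EA: "repl_equiv c n = EA c {1..n}"
  unfolding repl_equiv_def EA_def repl_step_def stepA_def perms_W ..

lemma stepA_sym: "(x, y) \<in> stepA c A \<Longrightarrow> (y, x) \<in> stepA c A"
  unfolding stepA_def by blast

lemma stepA_conv: "(stepA c A)\<inverse> = stepA c A"
  using stepA_sym by auto

lemma EA_alt: "EA c A = Id_on (W A) \<union> (stepA c A)\<^sup>+"
  unfolding EA_def stepA_conv by simp

lemma stepA_W: "stepA c A \<subseteq> W A \<times> W A"
  unfolding stepA_def by auto

lemma trancl_stepA_W: "(stepA c A)\<^sup>+ \<subseteq> W A \<times> W A"
  using stepA_W trancl_subset_Sigma by blast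

lemma EA_W: "EA c A \<subseteq> W A \<times> W A"
  using trancl_stepA_W unfolding EA_alt by auto

lemma EA_equiv: "equiv (W A) (EA c A)"
proof (rule equivI)
  show "refl_on (W A) (EA c A)"
    using EA_W unfolding refl_on_def EA_alt by auto
  have "sym ((stepA c A)\<^sup>+)"
    by (rule sym_trancl) (auto simp: sym_def intro: stepA_sym)
  then show "sym (EA c A)"
    unfolding EA_alt sym_def by auto
  show "trans (EA c A)"
    unfolding EA_alt trans_def by (auto intro: trancl_trans)
qed (rule EA_W)

lemma EA_refl: "x \<in> W A \<Longrightarrow> (x, x) \<in> EA c A"
  unfolding EA_alt by auto

lemma EA_step: "(x, y) \<in> stepA c A \<Longrightarrow> (x, y) \<in> EA c A"
  unfolding EA_alt by auto

lemma EA_trans: "(x, y) \<in> EA c A \<Longrightarrow> (y, z) \<in> EA c A \<Longrightarrow> (x, z) \<in> EA c A"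
  using EA_equiv[of A c] unfolding equiv_def trans_def by blast

lemma EA_sym: "(x, y) \<in> EA c A \<Longrightarrow> (y, x) \<in> EA c A"
  using EA_equiv[of A c] unfolding equiv_def sym_def by blast

lemma EA_WD: "(x, y) \<in> EA c A \<Longrightarrow> x \<in> W A \<and> y \<in> W A"
  using EA_W by blast

lemma W_iff: "xs \<in> W A \<longleftrightarrow> distinct xs \<and> set xs = A"
  by (simp add: W_def)

lemma set_window:
  assumes "a @ u @ b \<in> W A" "a @ v @ b \<in> W A"
  shows "set u = set v"
proof -
  have "set u = A - set a - set b" using assms(1) by (auto simp: W_def)
  moreover have "set v = A - set a - set b" using assms(2) by (auto simp: W_def)
  ultimately show ?thesis by simp
qed

lemma hd_min:
  assumes "std_starts_with_one u" "set u \<subseteq> A" "m \<in> set u" "\<forall>y\<in>A. m \<le> y"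
  shows "hd u = m"
proof -
  have "u \<noteq> []" "hd u \<le> m" using assms(1,3) by (auto simp: std_starts_with_one_def)
  moreover have "hd u \<in> A" using \<open>u \<noteq> []\<close> assms(2) hd_in_set by blast
  ultimately show ?thesis using assms(4) by force
qed

lemma step_split:
  assumes st: "(\<alpha> @ m # \<beta>, z) \<in> stepA c A" and mn: "\<forall>y\<in>A. m \<le> y"
  shows "\<exists>\<alpha>' \<beta>'. z = \<alpha>' @ m # \<beta>' \<and> (\<alpha>, \<alpha>') \<in> EA c (set \<alpha>)
            \<and> (m # \<beta>, m # \<beta>') \<in> EA c (set (m # \<beta>))"
proof -
  obtain a u v b where x: "\<alpha> @ m # \<beta> = a @ u @ b" and z: "z = a @ v @ b"
    and lu: "length u = c + 1" and lv: "length v = c + 1"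
    and su: "std_starts_with_one u" and sv: "std_starts_with_one v"
    and xW: "a @ u @ b \<in> W A" and zW: "a @ v @ b \<in> W A"
    using st unfolding stepA_def by auto
  have uv: "set u = set v" using set_window[OF xW zW] .
  have dx: "distinct (a @ u @ b)" and dz: "distinct (a @ v @ b)" using xW zW by (auto simp: W_def)
  have dx': "distinct (\<alpha> @ m # \<beta>)" using dx x by simp
  have nm: "m \<notin> set \<alpha>" "m \<notin> set \<beta>" using dx' by auto
  have A: "A = set (a @ u @ b)" using xW by (simp add: W_def)
  have "m \<in> set (a @ u @ b)" using x[symmetric] by simp
  then consider "m \<in> set a" | "m \<in> set u" | "m \<in> set b" by auto
  then show ?thesis
  proof cases
    case 1
    then obtain a1 a2 where a: "a = a1 @ m # a2" by (meson split_list)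
    have "\<alpha> @ m # \<beta> = a1 @ m # (a2 @ u @ b)" using x a by simp
    then have e: "\<alpha> = a1" "\<beta> = a2 @ u @ b" using append_Cons_eq_iff[OF nm] by blast+
    have "(m # \<beta>, m # (a2 @ v @ b)) \<in> stepA c (set (m # \<beta>))"
    proof -
      have W1: "m # \<beta> \<in> W (set (m # \<beta>))" using dx' by (simp add: W_def)
      have W2: "m # a2 @ v @ b \<in> W (set (m # \<beta>))" using dz a e uv by (auto simp: W_def)
      show ?thesis unfolding stepA_def mem_Collect_eq case_prod_conv
        apply (rule conjI[OF W1 conjI[OF W2]])
        apply (rule exI[of _ "m # a2"], rule exI[of _ "u"], rule exI[of _ "v"], rule exI[of _ "b"])
        using e lu lv su sv by auto
    qed
    moreover have "z = \<alpha> @ m # (a2 @ v @ b)" using z a e by simp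
    moreover have "(\<alpha>, \<alpha>) \<in> EA c (set \<alpha>)" using dx' by (intro EA_refl) (simp add: W_def)
    ultimately show ?thesis using EA_step by blast
  next
    case 2
    have "hd u = m" using hd_min[OF su _ 2 mn] A by auto
    moreover have "u \<noteq> []" using lu by auto
    ultimately obtain u' where u: "u = m # u'" by (cases u) auto
    have "hd v = m" using hd_min[OF sv _ _ mn] A uv 2 by auto
    moreover have "v \<noteq> []" using lv by auto
    ultimately obtain v' where v: "v = m # v'" by (cases v) auto
    have "\<alpha> @ m # \<beta> = a @ m # (u' @ b)" using x u by simp
    then have e: "\<alpha> = a" "\<beta> = u' @ b" using append_Cons_eq_iff[OF nm] by blast+
    have "(m # \<beta>, m # (v' @ b)) \<in> stepA c (set (m # \<beta>))"
    proof -
      have W1: "m # \<beta> \<in> W (set (m # \<beta>))" using dx' by (simp add: W_def)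
      have W2: "m # v' @ b \<in> W (set (m # \<beta>))" using dz u v e uv by (auto simp: W_def)
      show ?thesis unfolding stepA_def mem_Collect_eq case_prod_conv
        apply (rule conjI[OF W1 conjI[OF W2]])
        apply (rule exI[of _ "[]"], rule exI[of _ "u"], rule exI[of _ "v"], rule exI[of _ "b"])
        using e u v lu lv su sv by auto
    qed
    moreover have "z = \<alpha> @ m # (v' @ b)" using z v e by simp
    moreover have "(\<alpha>, \<alpha>) \<in> EA c (set \<alpha>)" using dx' by (intro EA_refl) (simp add: W_def)
    ultimately show ?thesis using EA_step by blast
  next
    case 3
    then obtain b1 b2 where b: "b = b1 @ m # b2" by (meson split_list)
    have "\<alpha> @ m # \<beta> = (a @ u @ b1) @ m # b2" using x b by simp
    then have e: "\<alpha> = a @ u @ b1" "\<beta> = b2" using append_Cons_eq_iff[OF nm] by blast+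
    have "(\<alpha>, a @ v @ b1) \<in> stepA c (set \<alpha>)"
    proof -
      have W1: "\<alpha> \<in> W (set \<alpha>)" using dx' by (simp add: W_def)
      have W2: "a @ v @ b1 \<in> W (set \<alpha>)" using dz b e uv by (auto simp: W_def)
      show ?thesis unfolding stepA_def mem_Collect_eq case_prod_conv
        apply (rule conjI[OF W1 conjI[OF W2]])
        apply (rule exI[of _ "a"], rule exI[of _ "u"], rule exI[of _ "v"], rule exI[of _ "b1"])
        using e lu lv su sv by auto
    qed
    moreover have "z = (a @ v @ b1) @ m # \<beta>" using z b e by simp
    moreover have "(m # \<beta>, m # \<beta>) \<in> EA c (set (m # \<beta>))" using dx' by (intro EA_refl) (simp add: W_def)
    ultimately show ?thesis using EA_step by blast
  qed
qed


lemma EA_split: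
  assumes e: "(\<alpha> @ m # \<beta>, z) \<in> EA c A" and mn: "\<forall>y\<in>A. m \<le> y"
  shows "\<exists>\<alpha>' \<beta>'. z = \<alpha>' @ m # \<beta>' \<and> (\<alpha>, \<alpha>') \<in> EA c (set \<alpha>)
            \<and> (m # \<beta>, m # \<beta>') \<in> EA c (set (m # \<beta>))"
proof -
  have xW: "\<alpha> @ m # \<beta> \<in> W A" using EA_WD[OF e] by simp
  have r1: "(\<alpha>, \<alpha>) \<in> EA c (set \<alpha>)" and r2: "(m # \<beta>, m # \<beta>) \<in> EA c (set (m # \<beta>))"
    using xW by (auto intro!: EA_refl simp: W_def)
  { fix x z assume "(x, z) \<in> (stepA c A)\<^sup>+"
    then have "\<forall>\<alpha> \<beta>. x = \<alpha> @ m # \<beta> \<longrightarrow> (\<exists>\<alpha>' \<beta>'. z = \<alpha>' @ m # \<beta>' \<and> (\<alpha>, \<alpha>') \<in> EA c (set \<alpha>)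
            \<and> (m # \<beta>, m # \<beta>') \<in> EA c (set (m # \<beta>)))"
    proof (induction rule: trancl_induct)
      case (base y)
      then show ?case using step_split[OF _ mn] by blast
    next
      case (step y z)
      show ?case
      proof (intro allI impI)
        fix \<alpha> \<beta> assume "x = \<alpha> @ m # \<beta>"
        with step.IH obtain \<alpha>' \<beta>' where y: "y = \<alpha>' @ m # \<beta>'" and
          h1: "(\<alpha>, \<alpha>') \<in> EA c (set \<alpha>)" and h2: "(m # \<beta>, m # \<beta>') \<in> EA c (set (m # \<beta>))" by blast
        from step_split[OF step.hyps(2)[unfolded y] mn] obtain \<alpha>'' \<beta>'' where
          z: "z = \<alpha>'' @ m # \<beta>''" and g1: "(\<alpha>', \<alpha>'') \<in> EA c (set \<alpha>')"
          and g2: "(m # \<beta>', m # \<beta>'') \<in> EA c (set (m # \<beta>'))" by blast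
        have "set \<alpha>' = set \<alpha>" using EA_WD[OF h1] by (simp add: W_def)
        moreover have "set (m # \<beta>') = set (m # \<beta>)" using EA_WD[OF h2] by (simp add: W_def)
        ultimately show "\<exists>\<alpha>' \<beta>'. z = \<alpha>' @ m # \<beta>' \<and> (\<alpha>, \<alpha>') \<in> EA c (set \<alpha>)
            \<and> (m # \<beta>, m # \<beta>') \<in> EA c (set (m # \<beta>))"
          using z h1 h2 g1 g2 EA_trans by metis
      qed
    qed }
  note tr = this
  show ?thesis
  proof (cases "(\<alpha> @ m # \<beta>, z) \<in> (stepA c A)\<^sup>+")
    case True
    then show ?thesis using tr by blast
  next
    case False
    then have "z = \<alpha> @ m # \<beta>" using e unfolding EA_alt by auto
    then show ?thesis using r1 r2 by blast
  qed
qed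

lemma EA_map:
  assumes st: "\<And>x y. (x, y) \<in> stepA c S \<Longrightarrow> (f x, f y) \<in> stepA c T"
    and w: "\<And>x. x \<in> W S \<Longrightarrow> f x \<in> W T"
    and e: "(x, y) \<in> EA c S"
  shows "(f x, f y) \<in> EA c T"
proof -
  { assume "(x, y) \<in> (stepA c S)\<^sup>+"
    then have "(f x, f y) \<in> EA c T"
      by (induction rule: trancl_induct) (auto intro: EA_step st EA_trans) }
  then show ?thesis using e w unfolding EA_alt[of c S] by (auto intro: EA_refl)
qed

lemma step_appR:
  assumes "(x, y) \<in> stepA c S" "\<gamma> \<in> W T" "S \<inter> T = {}"
  shows "(x @ \<gamma>, y @ \<gamma>) \<in> stepA c (S \<union> T)"
proof -
  obtain a u v b where "x = a @ u @ b" "y = a @ v @ b" "length u = c + 1" "length v = c + 1"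
    "std_starts_with_one u" "std_starts_with_one v" "x \<in> W S" "y \<in> W S"
    using assms(1) unfolding stepA_def by auto
  then show ?thesis using assms(2,3) unfolding stepA_def
    by (auto simp: W_def)
qed

lemma step_appL:
  assumes "(x, y) \<in> stepA c T" "\<alpha> \<in> W S" "S \<inter> T = {}"
  shows "(\<alpha> @ x, \<alpha> @ y) \<in> stepA c (S \<union> T)"
proof -
  obtain a u v b where "x = a @ u @ b" "y = a @ v @ b" "length u = c + 1" "length v = c + 1"
    "std_starts_with_one u" "std_starts_with_one v" "x \<in> W T" "y \<in> W T"
    using assms(1) unfolding stepA_def by auto
  then show ?thesis using assms(2,3) unfolding stepA_def
    by (auto simp: W_def) (metis append.assoc)
qed

lemma EA_append:
  assumes "(\<alpha>, \<alpha>') \<in> EA c S" "(\<gamma>, \<gamma>') \<in> EA c T" "S \<inter> T = {}"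
  shows "(\<alpha> @ \<gamma>, \<alpha>' @ \<gamma>') \<in> EA c (S \<union> T)"
proof -
  have g: "\<gamma> \<in> W T" and a': "\<alpha>' \<in> W S" using assms EA_WD by auto
  have "(\<alpha> @ \<gamma>, \<alpha>' @ \<gamma>) \<in> EA c (S \<union> T)"
    by (rule EA_map[OF step_appR[OF _ g assms(3)] _ assms(1)]) (use g assms(3) in \<open>auto simp: W_def\<close>)
  moreover have "(\<alpha>' @ \<gamma>, \<alpha>' @ \<gamma>') \<in> EA c (S \<union> T)"
    by (rule EA_map[OF step_appL[OF _ a' assms(3)] _ assms(2)]) (use a' assms(3) in \<open>auto simp: W_def\<close>)
  ultimately show ?thesis by (rule EA_trans)
qed

lemma EA_starts:
  assumes "(m # \<beta>, z) \<in> EA c T" "\<forall>y\<in>T. m \<le> y"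
  shows "\<exists>\<beta>'. z = m # \<beta>'"
proof -
  from EA_split[of "[]" m \<beta> z c T] assms obtain \<alpha>' \<beta>' where
    "z = \<alpha>' @ m # \<beta>'" "([], \<alpha>') \<in> EA c {}" by auto
  moreover have "\<alpha>' = []" using EA_WD[OF \<open>([], \<alpha>') \<in> EA c {}\<close>] by (simp add: W_def)
  ultimately show ?thesis by simp
qed

lemma class_split:
  assumes mn: "\<forall>y\<in>A. m \<le> y" and a: "\<alpha> \<in> W S" and S: "S \<subseteq> A - {m}"
    and g: "m # \<beta> \<in> W (A - S)"
  shows "EA c A `` {\<alpha> @ m # \<beta>} = (\<lambda>(x, y). x @ y) ` (EA c S `` {\<alpha>} \<times> EA c (A - S) `` {m # \<beta>})"
proof
  show "EA c A `` {\<alpha> @ m # \<beta>} \<subseteq> (\<lambda>(x, y). x @ y) ` (EA c S `` {\<alpha>} \<times> EA c (A - S) `` {m # \<beta>})"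
  proof
    fix z assume "z \<in> EA c A `` {\<alpha> @ m # \<beta>}"
    then have "(\<alpha> @ m # \<beta>, z) \<in> EA c A" by simp
    from EA_split[OF this mn] obtain \<alpha>' \<beta>' where "z = \<alpha>' @ m # \<beta>'"
      "(\<alpha>, \<alpha>') \<in> EA c (set \<alpha>)" "(m # \<beta>, m # \<beta>') \<in> EA c (set (m # \<beta>))" by blast
    moreover have "set \<alpha> = S" "set (m # \<beta>) = A - S" using a g by (auto simp: W_def)
    ultimately show "z \<in> (\<lambda>(x, y). x @ y) ` (EA c S `` {\<alpha>} \<times> EA c (A - S) `` {m # \<beta>})"
      by (auto intro!: image_eqI[of _ _ "(\<alpha>', m # \<beta>')"])
  qed
  show "(\<lambda>(x, y). x @ y) ` (EA c S `` {\<alpha>} \<times> EA c (A - S) `` {m # \<beta>}) \<subseteq> EA c A `` {\<alpha> @ m # \<beta>}"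
  proof clarsimp
    fix x y assume "(\<alpha>, x) \<in> EA c S" "(m # \<beta>, y) \<in> EA c (A - S)"
    from EA_append[OF this] have "(\<alpha> @ m # \<beta>, x @ y) \<in> EA c (S \<union> (A - S))" by auto
    moreover have "S \<union> (A - S) = A" using S by auto
    ultimately show "(\<alpha> @ m # \<beta>, x @ y) \<in> EA c A" by simp
  qed
qed


definition cl :: "nat \<Rightarrow> nat set \<Rightarrow> nat list set set" where
  "cl c A = W A // EA c A"

definition clP :: "nat \<Rightarrow> nat set \<Rightarrow> nat list set set" where
  "clP c A = {C \<in> cl c A. \<exists>\<sigma>\<in>C. std_starts_with_one \<sigma>}"

lemma class_eq: "C \<in> cl c A \<Longrightarrow> x \<in> C \<Longrightarrow> C = EA c A `` {x}"
  unfolding cl_def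
  by (metis EA_equiv Image_singleton_iff equiv_class_eq quotientE)

lemma cl_sub: "C \<in> cl c A \<Longrightarrow> C \<subseteq> W A"
  unfolding cl_def using EA_W by (auto elim!: quotientE)

lemma finite_W: "finite (W A)"
  by (simp add: W_perms)

lemma finite_cl: "finite (cl c A)"
  unfolding cl_def by (rule finite_quotient[OF finite_W EA_W])

lemma finite_clP: "finite (clP c A)"
  using finite_cl unfolding clP_def by auto

lemma clP_repr:
  assumes C: "C \<in> clP c T" and m: "m \<in> T" "\<forall>y\<in>T. m \<le> y"
  shows "\<exists>\<beta>. m # \<beta> \<in> W T \<and> C = EA c T `` {m # \<beta>}"
proof -
  obtain \<sigma> where s: "\<sigma> \<in> C" "std_starts_with_one \<sigma>" and Ccl: "C \<in> cl c T"
    using C unfolding clP_def by auto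
  have sW: "\<sigma> \<in> W T" using cl_sub[OF Ccl] s by auto
  have "hd \<sigma> = m" using hd_min[OF s(2), of T m] sW m by (auto simp: W_def)
  moreover have "\<sigma> \<noteq> []" using s(2) by (simp add: std_starts_with_one_def)
  ultimately obtain \<beta> where "\<sigma> = m # \<beta>" by (cases \<sigma>) auto
  then show ?thesis using sW class_eq[OF Ccl s(1)] by auto
qed

lemma sig_rep:
  assumes mA: "m \<in> A" "\<forall>y\<in>A. m \<le> y" and S: "S \<subseteq> A - {m}"
    and C1: "C1 \<in> cl c S" and C2: "C2 \<in> clP c (A - S)"
  shows "\<exists>\<alpha> \<beta>. \<alpha> \<in> W S \<and> m # \<beta> \<in> W (A - S) \<and> C1 = EA c S `` {\<alpha>}
     \<and> C2 = EA c (A - S) `` {m # \<beta>} \<and> (\<lambda>(x, y). x @ y) ` (C1 \<times> C2) = EA c A `` {\<alpha> @ m # \<beta>}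
     \<and> \<alpha> @ m # \<beta> \<in> W A"
proof -
  obtain \<alpha> where a: "\<alpha> \<in> W S" "C1 = EA c S `` {\<alpha>}"
    using C1 unfolding cl_def by (auto elim!: quotientE)
  have "m \<in> A - S" using mA S by auto
  then obtain \<beta> where b: "m # \<beta> \<in> W (A - S)" "C2 = EA c (A - S) `` {m # \<beta>}"
    using clP_repr[OF C2] mA by auto
  have "(\<lambda>(x, y). x @ y) ` (C1 \<times> C2) = EA c A `` {\<alpha> @ m # \<beta>}"
    using class_split[OF mA(2) a(1) S b(1)] a b by simp
  moreover have "\<alpha> @ m # \<beta> \<in> W A" using a(1) b(1) S mA by (auto simp: W_def)
  ultimately show ?thesis using a b by blast
qed

lemma card_decomp:
  assumes mA: "m \<in> A" "\<forall>y\<in>A. m \<le> y" and fin: "finite A"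
  shows "card (cl c A) = (\<Sum>S\<in>Pow (A - {m}). card (cl c S) * card (clP c (A - S)))"
proof -
  define Sig where "Sig = Sigma (Pow (A - {m})) (\<lambda>S. cl c S \<times> clP c (A - S))"
  define \<Phi> :: "nat set \<times> nat list set \<times> nat list set \<Rightarrow> nat list set"
    where "\<Phi> = (\<lambda>(S, C1, C2). (\<lambda>(x, y). x @ y) ` (C1 \<times> C2))"
  have inj: "inj_on \<Phi> Sig"
  proof (rule inj_onI)
    fix p q assume p: "p \<in> Sig" and q: "q \<in> Sig" and e: "\<Phi> p = \<Phi> q"
    obtain S C1 C2 where p': "p = (S, C1, C2)" by (cases p) auto
    obtain S' C1' C2' where q': "q = (S', C1', C2')" by (cases q) auto
    have hS: "S \<subseteq> A - {m}" "C1 \<in> cl c S" "C2 \<in> clP c (A - S)" using p p' Sig_def by auto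
    have hS': "S' \<subseteq> A - {m}" "C1' \<in> cl c S'" "C2' \<in> clP c (A - S')" using q q' Sig_def by auto
    obtain \<alpha> \<beta> where r: "\<alpha> \<in> W S" "m # \<beta> \<in> W (A - S)" "C1 = EA c S `` {\<alpha>}"
      "C2 = EA c (A - S) `` {m # \<beta>}" "\<Phi> p = EA c A `` {\<alpha> @ m # \<beta>}" "\<alpha> @ m # \<beta> \<in> W A"
      using sig_rep[OF mA hS] p' \<Phi>_def by auto
    obtain \<alpha>' \<beta>' where r': "\<alpha>' \<in> W S'" "m # \<beta>' \<in> W (A - S')" "C1' = EA c S' `` {\<alpha>'}"
      "C2' = EA c (A - S') `` {m # \<beta>'}" "\<Phi> q = EA c A `` {\<alpha>' @ m # \<beta>'}" "\<alpha>' @ m # \<beta>' \<in> W A"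
      using sig_rep[OF mA hS'] q' \<Phi>_def by auto
    have "\<alpha> @ m # \<beta> \<in> EA c A `` {\<alpha>' @ m # \<beta>'}"
      using e r(5,6) r'(5) equiv_class_self[OF EA_equiv] by metis
    then have "(\<alpha>' @ m # \<beta>', \<alpha> @ m # \<beta>) \<in> EA c A" by simp
    from EA_split[OF this mA(2)] obtain \<alpha>'' \<beta>'' where
      x: "\<alpha> @ m # \<beta> = \<alpha>'' @ m # \<beta>''" and g1: "(\<alpha>', \<alpha>'') \<in> EA c (set \<alpha>')"
      and g2: "(m # \<beta>', m # \<beta>'') \<in> EA c (set (m # \<beta>'))" by blast
    have nm: "m \<notin> set \<alpha>" "m \<notin> set \<beta>" using r(1,2) hS(1) by (auto simp: W_def)
    have eq: "\<alpha> = \<alpha>''" "\<beta> = \<beta>''" using append_Cons_eq_iff[OF nm] x by blast+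
    have sa: "set \<alpha>' = S'" "set (m # \<beta>') = A - S'" using r' by (auto simp: W_def)
    have "set \<alpha>'' = set \<alpha>'" using EA_WD[OF g1] by (simp add: W_def)
    moreover have "set \<alpha> = S" using r(1) by (simp add: W_def)
    ultimately have SS: "S = S'" using eq sa by simp
    have "C1' = C1" using r(3) r'(3) equiv_class_eq[OF EA_equiv g1] eq sa SS by simp
    moreover have "C2' = C2" using r(4) r'(4) equiv_class_eq[OF EA_equiv g2] eq sa SS by simp
    ultimately show "p = q" using p' q' SS by simp
  qed
  have img: "\<Phi> ` Sig = cl c A"
  proof
    show "\<Phi> ` Sig \<subseteq> cl c A"
    proof
      fix C assume "C \<in> \<Phi> ` Sig"
      then obtain S C1 C2 where "(S, C1, C2) \<in> Sig" "C = \<Phi> (S, C1, C2)" by auto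
      then have "S \<subseteq> A - {m}" "C1 \<in> cl c S" "C2 \<in> clP c (A - S)" and C: "C = \<Phi> (S, C1, C2)"
        using Sig_def by auto
      from sig_rep[OF mA this(1-3)] C show "C \<in> cl c A"
        unfolding cl_def \<Phi>_def by (auto intro: quotientI)
    qed
    show "cl c A \<subseteq> \<Phi> ` Sig"
    proof
      fix C assume "C \<in> cl c A"
      then obtain x where x: "x \<in> W A" "C = EA c A `` {x}" unfolding cl_def by (auto elim!: quotientE)
      then have "m \<in> set x" using mA by (simp add: W_def)
      then obtain \<alpha> \<beta> where xs: "x = \<alpha> @ m # \<beta>" by (meson split_list)
      define S where "S = set \<alpha>"
      have aW: "\<alpha> \<in> W S" and S: "S \<subseteq> A - {m}" and gW: "m # \<beta> \<in> W (A - S)"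
        using x(1) xs by (auto simp: W_def S_def)
      have C1: "EA c S `` {\<alpha>} \<in> cl c S" unfolding cl_def using aW by (rule quotientI)
      have "m # \<beta> \<in> EA c (A - S) `` {m # \<beta>}" using equiv_class_self[OF EA_equiv gW] .
      moreover have "std_starts_with_one (m # \<beta>)" using mA gW by (auto simp: std_starts_with_one_def W_def)
      ultimately have C2: "EA c (A - S) `` {m # \<beta>} \<in> clP c (A - S)"
        unfolding clP_def cl_def using gW by (auto intro: quotientI)
      have "C = \<Phi> (S, EA c S `` {\<alpha>}, EA c (A - S) `` {m # \<beta>})"
        using class_split[OF mA(2) aW S gW] x xs \<Phi>_def by simp
      moreover have "(S, EA c S `` {\<alpha>}, EA c (A - S) `` {m # \<beta>}) \<in> Sig"
        using S C1 C2 Sig_def by auto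
      ultimately show "C \<in> \<Phi> ` Sig" by blast
    qed
  qed
  have "card (cl c A) = card Sig" using card_image[OF inj] img by simp
  also have "\<dots> = (\<Sum>S\<in>Pow (A - {m}). card (cl c S \<times> clP c (A - S)))"
    unfolding Sig_def by (rule card_SigmaI) (use fin finite_cl finite_clP in auto)
  also have "\<dots> = (\<Sum>S\<in>Pow (A - {m}). card (cl c S) * card (clP c (A - S)))"
    by (simp add: card_cartesian_product)
  finally show ?thesis .
qed



definition smono :: "(nat \<Rightarrow> nat) \<Rightarrow> nat set \<Rightarrow> bool" where
  "smono h A \<longleftrightarrow> (\<forall>x\<in>A. \<forall>y\<in>A. x < y \<longrightarrow> h x < h y)"

lemma smono_lt_iff: 
  assumes "smono h A" "x \<in> A" "y \<in> A" shows "h x < h y \<longleftrightarrow> x < y"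
proof
  assume "x < y" then show "h x < h y" using assms unfolding smono_def by blast
next
  assume a: "h x < h y"
  show "x < y"
  proof (rule ccontr)
    assume "\<not> x < y"
    then have "y < x \<or> y = x" by auto
    then show False
    proof
      assume "y < x" then have "h y < h x" using assms unfolding smono_def by blast
      then show False using a by simp
    next
      assume "y = x" then show False using a by simp
    qed
  qed
qed

lemma smono_inj: assumes "smono h A" shows "inj_on h A"
proof (rule inj_onI)
  fix x y assume xy: "x \<in> A" "y \<in> A" "h x = h y"
  have "\<not> x < y" using smono_lt_iff[OF assms xy(1,2)] xy(3) by simp
  moreover have "\<not> y < x" using smono_lt_iff[OF assms xy(2,1)] xy(3) by simp
  ultimately show "x = y" by simp
qed

lemma ssw_map:
  assumes "smono h A" "set u \<subseteq> A"
  shows "std_starts_with_one (map h u) \<longleftrightarrow> std_starts_with_one u"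
proof (cases u)
  case Nil then show ?thesis by (simp add: std_starts_with_one_def)
next
  case (Cons a u')
  have aA: "a \<in> A" using assms Cons by auto
  have "(\<forall>w\<in>set u. h a \<le> h w) \<longleftrightarrow> (\<forall>w\<in>set u. a \<le> w)"
  proof -
    have "\<And>w. w \<in> set u \<Longrightarrow> h a \<le> h w \<longleftrightarrow> a \<le> w"
    proof -
      fix w assume "w \<in> set u" then have wA: "w \<in> A" using assms by auto
      show "h a \<le> h w \<longleftrightarrow> a \<le> w" using smono_lt_iff[OF assms(1) wA aA] by (simp add: not_less[symmetric])
    qed
    then show ?thesis by blast
  qed
  then show ?thesis using Cons by (auto simp: std_starts_with_one_def)
qed

lemma W_map: "smono h A \<Longrightarrow> x \<in> W A \<Longrightarrow> map h x \<in> W (h ` A)"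
  unfolding W_def using smono_inj by (auto simp: distinct_map inj_on_subset)

lemma relabel_step:
  assumes mono: "smono h A" and st: "(x, y) \<in> stepA c A"
  shows "(map h x, map h y) \<in> stepA c (h ` A)"
proof -
  obtain a u v b where e: "x = a @ u @ b" "y = a @ v @ b" "length u = c + 1" "length v = c + 1"
    "std_starts_with_one u" "std_starts_with_one v" and W: "x \<in> W A" "y \<in> W A"
    using st unfolding stepA_def by auto
  have "set u \<subseteq> A" "set v \<subseteq> A" using W e by (auto simp: W_def)
  then have "std_starts_with_one (map h u)" "std_starts_with_one (map h v)"
    using ssw_map[OF mono] e by auto
  moreover have "map h x = map h a @ map h u @ map h b" "map h y = map h a @ map h v @ map h b"
    using e by auto
  ultimately show ?thesis unfolding stepA_def using W_map[OF mono] W e(3,4) by fastforce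
qed

lemma relabel_EA: "smono h A \<Longrightarrow> (x, y) \<in> EA c A \<Longrightarrow> (map h x, map h y) \<in> EA c (h ` A)"
  by (rule EA_map[OF relabel_step W_map])

lemma card_relabel:
  assumes mono: "smono h A" and P: "\<And>x. x \<in> W A \<Longrightarrow> P (map h x) = P x"
  shows "card {C \<in> cl c A. \<exists>\<sigma>\<in>C. P \<sigma>} = card {C \<in> cl c (h ` A). \<exists>\<sigma>\<in>C. P \<sigma>}"
proof -
  define g where "g = inv_into A h"
  have inj: "inj_on h A" using smono_inj[OF mono] .
  have gh: "\<And>x. x \<in> A \<Longrightarrow> g (h x) = x" unfolding g_def using inj by (simp add: inv_into_f_f)
  have gA: "g ` (h ` A) = A"
  proof -
    have "g ` (h ` A) = (\<lambda>x. g (h x)) ` A" by (rule image_image)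
    also have "\<dots> = (\<lambda>x. x) ` A" by (rule image_cong) (auto simp: gh)
    finally show ?thesis by simp
  qed
  have gmono: "smono g (h ` A)"
    unfolding smono_def
  proof (intro ballI impI)
    fix p q assume "p \<in> h ` A" "q \<in> h ` A" "p < q"
    then obtain x y where "x \<in> A" "y \<in> A" "p = h x" "q = h y" "h x < h y" by blast
    then show "g p < g q" using gh smono_lt_iff[OF mono] by simp
  qed
  have mgh: "\<And>x. x \<in> W A \<Longrightarrow> map g (map h x) = x"
    by (auto simp: W_def gh intro!: map_idI)
  have surjW: "\<And>z. z \<in> W (h ` A) \<Longrightarrow> \<exists>x\<in>W A. z = map h x"
  proof -
    fix z assume z: "z \<in> W (h ` A)"
    have "map g z \<in> W A" using W_map[OF gmono z] gA by simp
    moreover have "map h (map g z) = z"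
      using z by (auto simp: W_def g_def f_inv_into_f intro!: map_idI)
    ultimately show "\<exists>x\<in>W A. z = map h x" by (intro bexI[of _ "map g z"]) simp_all
  qed
  have injW: "inj_on (map h) (W A)"
  proof (rule inj_on_mapI)
    have "\<Union>(set ` W A) \<subseteq> A" by (auto simp: W_def)
    then show "inj_on h (\<Union>(set ` W A))" by (rule inj_on_subset[OF inj])
  qed
  have cimg: "\<And>x. x \<in> W A \<Longrightarrow> map h ` (EA c A `` {x}) = EA c (h ` A) `` {map h x}"
  proof -
    fix x assume x: "x \<in> W A"
    show "map h ` (EA c A `` {x}) = EA c (h ` A) `` {map h x}"
    proof
      show "map h ` (EA c A `` {x}) \<subseteq> EA c (h ` A) `` {map h x}"
        using relabel_EA[OF mono] by blast
      show "EA c (h ` A) `` {map h x} \<subseteq> map h ` (EA c A `` {x})"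
      proof
        fix z assume "z \<in> EA c (h ` A) `` {map h x}"
        then have ez: "(map h x, z) \<in> EA c (h ` A)" by simp
        have "z \<in> W (h ` A)" using EA_WD[OF ez] by simp
        then obtain y where y: "y \<in> W A" "z = map h y" using surjW by blast
        have "(map g (map h x), map g (map h y)) \<in> EA c (g ` h ` A)"
          using relabel_EA[OF gmono ez] y by simp
        then have "(x, y) \<in> EA c A" using mgh x y gA by simp
        then show "z \<in> map h ` (EA c A `` {x})" using y by auto
      qed
    qed
  qed
  have injC: "inj_on (image (map h)) (cl c A)"
  proof (rule inj_onI)
    fix C D assume "C \<in> cl c A" "D \<in> cl c A" "map h ` C = map h ` D"
    then show "C = D" using inj_on_image_eq_iff[OF injW cl_sub cl_sub] by simp
  qed
  have img: "image (map h) ` {C \<in> cl c A. \<exists>\<sigma>\<in>C. P \<sigma>} = {C \<in> cl c (h ` A). \<exists>\<sigma>\<in>C. P \<sigma>}"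
  proof
    show "image (map h) ` {C \<in> cl c A. \<exists>\<sigma>\<in>C. P \<sigma>} \<subseteq> {C \<in> cl c (h ` A). \<exists>\<sigma>\<in>C. P \<sigma>}"
    proof clarify
      fix C \<sigma> assume C: "C \<in> cl c A" and s: "\<sigma> \<in> C" "P \<sigma>"
      obtain x where x: "x \<in> W A" "C = EA c A `` {x}" using C unfolding cl_def by (auto elim!: quotientE)
      have "map h ` C \<in> cl c (h ` A)" using cimg[OF x(1)] x W_map[OF mono x(1)]
        unfolding cl_def by (auto intro: quotientI)
      moreover have "P (map h \<sigma>)" using P s cl_sub[OF C] by auto
      ultimately show "map h ` C \<in> cl c (h ` A) \<and> (\<exists>\<sigma>\<in>map h ` C. P \<sigma>)" using s by blast
    qed
    show "{C \<in> cl c (h ` A). \<exists>\<sigma>\<in>C. P \<sigma>} \<subseteq> image (map h) ` {C \<in> cl c A. \<exists>\<sigma>\<in>C. P \<sigma>}"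
    proof clarify
      fix D \<tau> assume D: "D \<in> cl c (h ` A)" and t: "\<tau> \<in> D" "P \<tau>"
      obtain z where z: "z \<in> W (h ` A)" "D = EA c (h ` A) `` {z}" using D unfolding cl_def by (auto elim!: quotientE)
      obtain x where x: "x \<in> W A" "z = map h x" using surjW[OF z(1)] by blast
      have D': "D = map h ` (EA c A `` {x})" using cimg[OF x(1)] x z by simp
      have Ccl: "EA c A `` {x} \<in> cl c A" unfolding cl_def using x(1) by (rule quotientI)
      obtain \<sigma> where s: "\<sigma> \<in> EA c A `` {x}" "\<tau> = map h \<sigma>" using t D' by auto
      have "P \<sigma>" using P s t cl_sub[OF Ccl] by auto
      then show "D \<in> image (map h) ` {C \<in> cl c A. \<exists>\<sigma>\<in>C. P \<sigma>}" using D' Ccl s by blast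
    qed
  qed
  have "card {C \<in> cl c A. \<exists>\<sigma>\<in>C. P \<sigma>} = card (image (map h) ` {C \<in> cl c A. \<exists>\<sigma>\<in>C. P \<sigma>})"
    by (rule card_image[symmetric]) (rule inj_on_subset[OF injC], auto)
  then show ?thesis using img by simp
qed


lemma exists_relabel:
  assumes "finite A"
  shows "\<exists>h. smono h {1..card A} \<and> h ` {1..card A} = A"
proof -
  define xs where "xs = sorted_list_of_set A"
  have sx: "sorted_wrt (<) xs" unfolding xs_def by (rule strict_sorted_list_of_set)
  have setx: "set xs = A" unfolding xs_def using assms by simp
  have lx: "length xs = card A" unfolding xs_def by simp
  define h where "h i = xs ! (i - 1)" for i
  have "smono h {1..card A}"
    unfolding smono_def h_def
  proof (intro ballI impI)
    fix x y assume "x \<in> {1..card A}" "y \<in> {1..card A}" "x < y"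
    then show "xs ! (x - 1) < xs ! (y - 1)" using sorted_wrt_nth_less[OF sx, of "x - 1" "y - 1"] lx by auto
  qed
  moreover have "h ` {1..card A} = A"
  proof
    show "h ` {1..card A} \<subseteq> A" unfolding h_def using setx lx by (auto intro!: nth_mem[of _ xs, simplified setx])
    show "A \<subseteq> h ` {1..card A}"
    proof
      fix a assume "a \<in> A"
      then obtain i where i: "i < length xs" "xs ! i = a" using setx by (auto simp: in_set_conv_nth)
      then have "h (Suc i) = a" "Suc i \<in> {1..card A}" using lx by (auto simp: h_def)
      then show "a \<in> h ` {1..card A}" by (metis imageI)
    qed
  qed
  ultimately show ?thesis by blast
qed

lemma cl_nonempty: "C \<in> cl c A \<Longrightarrow> \<exists>\<sigma>\<in>C. True"
  unfolding cl_def using equiv_class_self[OF EA_equiv] by (auto elim!: quotientE)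

lemma card_cl_std: "finite A \<Longrightarrow> card (cl c A) = card (cl c {1..card A})"
proof -
  assume fA: "finite A"
  obtain h where h: "smono h {1..card A}" "h ` {1..card A} = A" using exists_relabel[OF fA] by blast
  have "card {C \<in> cl c {1..card A}. \<exists>\<sigma>\<in>C. True} = card {C \<in> cl c (h ` {1..card A}). \<exists>\<sigma>\<in>C. True}"
    by (rule card_relabel[OF h(1)]) simp
  moreover have "\<And>B. {C \<in> cl c B. \<exists>\<sigma>\<in>C. True} = cl c B" using cl_nonempty by blast
  ultimately show ?thesis using h(2) by simp
qed

lemma card_clP_std: "finite A \<Longrightarrow> card (clP c A) = card (clP c {1..card A})"
proof -
  assume fA: "finite A"
  obtain h where h: "smono h {1..card A}" "h ` {1..card A} = A" using exists_relabel[OF fA] by blast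
  have "card {C \<in> cl c {1..card A}. \<exists>\<sigma>\<in>C. std_starts_with_one \<sigma>}
      = card {C \<in> cl c (h ` {1..card A}). \<exists>\<sigma>\<in>C. std_starts_with_one \<sigma>}"
    by (rule card_relabel[OF h(1)]) (rule ssw_map[OF h(1)], simp add: W_def)
  then show ?thesis using h(2) unfolding clP_def by simp
qed

lemma sum_pow_card:
  assumes "finite B"
  shows "(\<Sum>S\<in>Pow B. H (card S)) = (\<Sum>k=0..card B. (card B choose k) * H k)"
proof -
  have "(\<Sum>S\<in>Pow B. H (card S)) = (\<Sum>k\<in>{0..card B}. \<Sum>S\<in>{S \<in> Pow B. card S = k}. H (card S))"
    by (rule sum.group[symmetric]) (use assms in \<open>auto intro: card_mono\<close>)
  also have "\<dots> = (\<Sum>k\<in>{0..card B}. (card B choose k) * H k)"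
  proof (rule sum.cong[OF refl])
    fix k
    have "(\<Sum>S\<in>{S \<in> Pow B. card S = k}. H (card S)) = (\<Sum>S\<in>{S \<in> Pow B. card S = k}. H k)"
      by (rule sum.cong) auto
    also have "\<dots> = card {S \<in> Pow B. card S = k} * H k" by simp
    also have "{S \<in> Pow B. card S = k} = {S. S \<subseteq> B \<and> card S = k}" by auto
    finally show "(\<Sum>S\<in>{S \<in> Pow B. card S = k}. H (card S)) = (card B choose k) * H k"
      using n_subsets[OF assms] by simp
  qed
  finally show ?thesis .
qed

lemma classes_cl: "classes c n = cl c {1..n}"
  unfolding classes_def cl_def perms_W repl_equiv_EA ..

lemma num_classes_cl: "num_classes c n = card (cl c {1..n})"
  unfolding num_classes_def classes_cl ..

lemma squished1: "\<sigma> \<in> W {1..n} \<Longrightarrow> squished c 1 \<sigma> \<longleftrightarrow> std_starts_with_one \<sigma>"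
proof (cases \<sigma>)
  case Nil then show ?thesis by (simp add: squished_def std_starts_with_one_def)
next
  case (Cons a l)
  assume W: "\<sigma> \<in> W {1..n}"
  then have a: "a \<in> {1..n}" "set \<sigma> = {1..n}" using Cons by (auto simp: W_def)
  then have one: "1 \<in> set \<sigma>" by auto
  have "squished c 1 \<sigma> \<longleftrightarrow> a = 1" using Cons by (auto simp: squished_def)
  moreover have "std_starts_with_one \<sigma> \<longleftrightarrow> a = 1"
  proof
    assume "std_starts_with_one \<sigma>" then have "a \<le> 1" using one Cons by (auto simp: std_starts_with_one_def)
    then show "a = 1" using a by auto
  next
    assume "a = 1" then show "std_starts_with_one \<sigma>" using Cons a by (auto simp: std_starts_with_one_def)
  qed
  ultimately show ?thesis by simp
qed

lemma num_sq_clP: "num_squished_classes c 1 n = card (clP c {1..n})"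
proof -
  have "{C \<in> classes c n. \<exists>\<sigma>\<in>C. squished c 1 \<sigma>} = clP c {1..n}"
    unfolding classes_cl clP_def using cl_sub squished1 by blast
  then show ?thesis unfolding num_squished_classes_def by simp
qed

lemma small_case:
  assumes "n < c + 1"
  shows "num_classes c n = fact n"
proof -
  have "stepA c {1..n} = {}"
  proof -
    { fix x y assume "(x, y) \<in> stepA c {1..n}"
      then obtain a u v b where "x = a @ u @ b" "length u = c + 1" "x \<in> W {1..n}"
        unfolding stepA_def by auto
      moreover have "length x = n" if "x \<in> W {1..n}"
        using that distinct_card[of x] by (simp add: W_def)
      ultimately have False using assms by auto }
    then show ?thesis by auto
  qed
  then have E: "EA c {1..n} = Id_on (W {1..n})" unfolding EA_alt by simp
  have "cl c {1..n} = (\<lambda>x. {x}) ` W {1..n}"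
    unfolding cl_def E quotient_def by auto
  then have "card (cl c {1..n}) = card (W {1..n})"
    by (simp add: card_image)
  also have "\<dots> = fact n" by (simp add: W_perms)
  finally show ?thesis by (simp add: num_classes_cl)
qed

lemma big_case:
  assumes "n \<ge> 1"
  shows "num_classes c n = (\<Sum>j = 1..n. num_classes c (j - 1) * num_squished_classes c 1 (n - j + 1)
                          * ((n - 1) choose (j - 1)))"
proof -
  define F where "F k = card (cl c {1..k})" for k
  define G where "G k = card (clP c {1..k})" for k
  define B where "B = {1..n} - {1::nat}"
  have fB: "finite B" and cB: "card B = n - 1" using assms by (auto simp: B_def)
  have "num_classes c n = (\<Sum>S\<in>Pow B. card (cl c S) * card (clP c ({1..n} - S)))"
    unfolding num_classes_cl B_def by (rule card_decomp) (use assms in auto)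
  also have "\<dots> = (\<Sum>S\<in>Pow B. F (card S) * G (n - card S))"
  proof (rule sum.cong[OF refl])
    fix S assume "S \<in> Pow B"
    then have S: "S \<subseteq> {1..n}" "finite S" using B_def finite_subset[OF _ fB] by auto
    have "card ({1..n} - S) = n - card S" using S by (simp add: card_Diff_subset)
    then show "card (cl c S) * card (clP c ({1..n} - S)) = F (card S) * G (n - card S)"
      unfolding F_def G_def using card_cl_std[OF S(2)] card_clP_std[of "{1..n} - S"] by simp
  qed
  also have "\<dots> = (\<Sum>k=0..n - 1. ((n - 1) choose k) * (F k * G (n - k)))"
    using sum_pow_card[OF fB, of "\<lambda>k. F k * G (n - k)"] cB by simp
  also have "\<dots> = (\<Sum>j = 1..n. F (j - 1) * G (n - j + 1) * ((n - 1) choose (j - 1)))"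
  proof -
    have "{1..n} = {Suc 0..Suc (n - 1)}" using assms by auto
    then have "(\<Sum>j = 1..n. F (j - 1) * G (n - j + 1) * ((n - 1) choose (j - 1)))
        = (\<Sum>j = Suc 0..Suc (n - 1). F (j - 1) * G (n - j + 1) * ((n - 1) choose (j - 1)))" by simp
    also have "\<dots> = (\<Sum>k=0..n - 1. F (Suc k - 1) * G (n - Suc k + 1) * ((n - 1) choose (Suc k - 1)))"
      by (rule sum.shift_bounds_cl_Suc_ivl)
    also have "\<dots> = (\<Sum>k=0..n - 1. F k * G (n - Suc k + 1) * ((n - 1) choose k))" by simp
    finally have "(\<Sum>j = 1..n. F (j - 1) * G (n - j + 1) * ((n - 1) choose (j - 1)))
        = (\<Sum>k=0..n - 1. F k * G (n - Suc k + 1) * ((n - 1) choose k))" .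
    also have "\<dots> = (\<Sum>k=0..n - 1. ((n - 1) choose k) * (F k * G (n - k)))"
    proof (rule sum.cong[OF refl])
      fix k assume "k \<in> {0..n - 1}"
      then have "n - Suc k + 1 = n - k" using assms by auto
      then show "F k * G (n - Suc k + 1) * ((n - 1) choose k) = ((n - 1) choose k) * (F k * G (n - k))"
        by simp
    qed
    finally show ?thesis by simp
  qed
  finally show ?thesis unfolding F_def G_def num_classes_cl num_sq_clP .
qed

theorem theorem3p4:
  fixes c n :: nat
  assumes "c \<ge> 1"
  shows "num_classes c n =
    (if n < c + 1 then fact n
     else (\<Sum>j = 1..n. num_classes c (j - 1) * num_squished_classes c 1 (n - j + 1)
                          * ((n - 1) choose (j - 1))))"
  using small_case big_case assms by auto

end
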